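(* Fix $\mu > 0$. Consider the following probabilistic model of distributed computation of $\mathbf{A}\mathbf{x}$ for $\mathbf{A} \in \mathbb{R}^{M\times N}$, $\mathbf{x}\in\mathbb{R}^N$, using $P$ processors. The time for a processor to compute a dot product of length $\ell$ is a random variable $T$ with $\Pr(T \le t) = 1 - \exp(-\mu(t/\ell - 1))$ for $t \ge \ell$ and $\Pr(T\le t)=0$ for $t<\ell$; the times of different processors are independent. The strategies are: (Uncoded) the $M$ rows are distributed among the $P$ processors, row $i$ being split into $P_i \in \{\lfloor P/M\rfloor, \lceil P/M\rceil\}$ blocks ($\sum_i P_i = P$), each processor computing one block (a dot product of length $N/P_i$); the computation finishes when all $P$ processors finish. (Repetition) each row is assigned to $P_i \in \{\lfloor P/M\rfloor, \lceil P/M\rceil\}$ processors ($\sum_i P_i=P$), each computing a full dot product of length $N$; the computation finishes when for every row at least one of its processors has finished. (MDS) each processor computes a dot product of length $N$; the computation finishes when any $M$ of the $P$ processors finish. (Short-Dot with parameter $K$) each processor computes a dot product of length $s = \frac{N}{P}(P-K+M)$; the computation finishes when any $K$ of the $P$ processors finish. Let $T_{UC}, T_{Rep}, T_{MDS}, T_{SD}$ denote the corresponding completion times. Suppose $M = M(P)$ scales as $P/\log P$ as $P \to \infty$, and Short-Dot is used with $K = P - M/2$. Then $\mathbb{E}[T_{SD}]/N = O\!\left(\frac{\log\log P}{\log P}\right)$, which tends to $0$ as $P\to\infty$, whereas $\mathbb{E}[T_{MDS}]/N$, $\mathbb{E}[T_{Rep}]/N$ and $\mathbb{E}[T_{UC}]/N$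 are all $\Omega(1)$, and so do not tend to $0$ as $P \to \infty$.
   Context: Asymptotic notation refers to $P \to \infty$ with $\mu$ fixed, uniformly in $N$. "$M$ scales as $P/\log P$" means $M(P) = \Theta(P/\log P)$; $M$ is taken to be an even positive integer so that $K = P - M/2$ is an integer (and $K > M$ holds for large $P$). $N$ is assumed divisible by the relevant block sizes so that dot-product lengths are integers. *)

theory Defs
  imports "HOL-Probability.Probability" "HOL-Library.Landau_Symbols"
begin

definition sexp_cdf :: "real \<Rightarrow> real \<Rightarrow> real \<Rightarrow> real" where
  "sexp_cdf mu l t = (if t < l then 0 else 1 - exp (- mu * (t / l - 1)))"

definition sexp_time :: "real \<Rightarrow> real \<Rightarrow> real measure" where
  "sexp_time mu l = interval_measure (sexp_cdf mu l)"

definition proc_space :: "real \<Rightarrow> (nat \<Rightarrow> real) \<Rightarrow> nat \<Rightarrow> (nat \<Rightarrow> real) measure" where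
  "proc_space mu len P = PiM {..<P} (\<lambda>p. sexp_time mu (len p))"

text \<open>k-th smallest (k \<ge> 1) of the times of processors 0..P-1: the time at which
  k processors have finished.\<close>
definition kth_smallest :: "nat \<Rightarrow> nat \<Rightarrow> (nat \<Rightarrow> real) \<Rightarrow> real" where
  "kth_smallest k P \<omega> = sort (map \<omega> [0..<P]) ! (k - 1)"

definition row_count :: "nat \<Rightarrow> (nat \<Rightarrow> nat) \<Rightarrow> nat \<Rightarrow> nat" where
  "row_count P asg i = card {p. p < P \<and> asg p = i}"

text \<open>Valid assignment of the P processors to the M rows: row i receives
  P_i \<in> {floor(P/M), ceil(P/M)} processors (then automatically sum P_i = P).\<close>
definition valid_rows :: "nat \<Rightarrow> nat \<Rightarrow> (nat \<Rightarrow> nat) \<Rightarrow> bool" where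
  "valid_rows M P asg \<longleftrightarrow> (\<forall>p<P. asg p < M) \<and>
     (\<forall>i<M. row_count P asg i \<in> {nat \<lfloor>real P / real M\<rfloor>, nat \<lceil>real P / real M\<rceil>})"

definition E_UC :: "real \<Rightarrow> nat \<Rightarrow> nat \<Rightarrow> (nat \<Rightarrow> nat) \<Rightarrow> real" where
  "E_UC mu P N asg =
     integral\<^sup>L (proc_space mu (\<lambda>p. real N / real (row_count P asg (asg p))) P)
       (\<lambda>\<omega>. Max (\<omega> ` {..<P}))"

definition E_Rep :: "real \<Rightarrow> nat \<Rightarrow> nat \<Rightarrow> nat \<Rightarrow> (nat \<Rightarrow> nat) \<Rightarrow> real" where
  "E_Rep mu M P N asg =
     integral\<^sup>L (proc_space mu (\<lambda>p. real N) P)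
       (\<lambda>\<omega>. Max ((\<lambda>i. Min (\<omega> ` {p. p < P \<and> asg p = i})) ` {..<M}))"

definition E_MDS :: "real \<Rightarrow> nat \<Rightarrow> nat \<Rightarrow> nat \<Rightarrow> real" where
  "E_MDS mu M P N = integral\<^sup>L (proc_space mu (\<lambda>p. real N) P) (kth_smallest M P)"

definition E_SD :: "real \<Rightarrow> nat \<Rightarrow> nat \<Rightarrow> nat \<Rightarrow> nat \<Rightarrow> real" where
  "E_SD mu M K P N =
     integral\<^sup>L (proc_space mu (\<lambda>p. real N / real P * (real P - real K + real M)) P)
       (kth_smallest K P)"

end

theory Submission
  imports Defs
begin


lemma len_filter_map_upt: "length (filter Q (map f [0..<n])) = card {i. i < n \<and> Q (f i)}"
  unfolding length_filter_conv_card by (rule arg_cong[where f=card]) auto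

lemma len_filter_mset: "mset xs = mset ys \<Longrightarrow> length (filter Q xs) = length (filter Q ys)"
  by (metis mset_filter size_mset)

lemma sorted_nth_le_iff:
  fixes xs :: "real list"
  assumes "sorted xs" "1 \<le> K" "K \<le> length xs"
  shows "xs ! (K - 1) \<le> t \<longleftrightarrow> K \<le> card {i. i < length xs \<and> xs ! i \<le> t}"
proof
  assume h: "xs ! (K - 1) \<le> t"
  have "{0..<K} \<subseteq> {i. i < length xs \<and> xs ! i \<le> t}"
  proof
    fix i assume "i \<in> {0..<K}"
    then have "i \<le> K - 1" "K - 1 < length xs" using assms by auto
    then have "xs ! i \<le> xs ! (K - 1)" using sorted_nth_mono[OF assms(1)] by blast
    moreover have "i < length xs" using \<open>i \<le> K - 1\<close> \<open>K - 1 < length xs\<close> by linarith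
    ultimately show "i \<in> {i. i < length xs \<and> xs ! i \<le> t}" using h by auto
  qed
  then show "K \<le> card {i. i < length xs \<and> xs ! i \<le> t}"
  proof -
    assume "{0..<K} \<subseteq> {i. i < length xs \<and> xs ! i \<le> t}"
    then have "card {0..<K} \<le> card {i. i < length xs \<and> xs ! i \<le> t}" by (rule card_mono[rotated]) simp
    then show ?thesis by simp
  qed
next
  assume h: "K \<le> card {i. i < length xs \<and> xs ! i \<le> t}"
  show "xs ! (K - 1) \<le> t"
  proof (rule ccontr)
    assume "\<not> xs ! (K - 1) \<le> t"
    have "{i. i < length xs \<and> xs ! i \<le> t} \<subseteq> {0..<K-1}"
    proof
      fix i assume i: "i \<in> {i. i < length xs \<and> xs ! i \<le> t}"
      show "i \<in> {0..<K-1}"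
      proof (rule ccontr)
        assume "i \<notin> {0..<K-1}"
        then have "K - 1 \<le> i" by auto
        then have "xs ! (K-1) \<le> xs ! i" using sorted_nth_mono[OF assms(1)] i by blast
        then show False using i \<open>\<not> xs ! (K - 1) \<le> t\<close> by auto
      qed
    qed
    then have "card {i. i < length xs \<and> xs ! i \<le> t} \<le> K - 1"
    proof -
      assume "{i. i < length xs \<and> xs ! i \<le> t} \<subseteq> {0..<K-1}"
      then have "card {i. i < length xs \<and> xs ! i \<le> t} \<le> card {0..<K-1}" by (intro card_mono) simp_all
      then show ?thesis by simp
    qed
    then show False using h assms by linarith
  qed
qed

lemma kth_le_iff:
  assumes "1 \<le> K" "K \<le> P"
  shows "kth_smallest K P \<omega> \<le> t \<longleftrightarrow> K \<le> card {p. p < P \<and> \<omega> p \<le> t}"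
proof -
  let ?xs = "sort (map \<omega> [0..<P])"
  have "kth_smallest K P \<omega> \<le> t \<longleftrightarrow> K \<le> card {i. i < length ?xs \<and> ?xs ! i \<le> t}"
    unfolding kth_smallest_def using assms by (intro sorted_nth_le_iff) auto
  also have "card {i. i < length ?xs \<and> ?xs ! i \<le> t} = length (filter (\<lambda>x. x \<le> t) ?xs)"
    by (simp add: length_filter_conv_card)
  also have "\<dots> = length (filter (\<lambda>x. x \<le> t) (map \<omega> [0..<P]))"
    by (rule len_filter_mset) simp
  also have "\<dots> = card {p. p < P \<and> \<omega> p \<le> t}" by (rule len_filter_map_upt)
  finally show ?thesis .
qed

lemma kth_mem:
  assumes "1 \<le> K" "K \<le> P"
  shows "\<exists>p<P. kth_smallest K P \<omega> = \<omega> p"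
proof -
  let ?xs = "sort (map \<omega> [0..<P])"
  have "?xs ! (K - 1) \<in> set ?xs" using assms by (intro nth_mem) auto
  then show ?thesis unfolding kth_smallest_def by auto
qed

lemma kth_pw_bound:
  assumes "1 \<le> K" "K \<le> P"
  shows "real (P - K + 1) * (kth_smallest K P \<omega> - t0) \<le> (\<Sum>p<P. max 0 (\<omega> p - t0))"
proof (cases "kth_smallest K P \<omega> \<le> t0")
  case True
  have "real (P - K + 1) * (kth_smallest K P \<omega> - t0) \<le> 0"
    using True by (simp add: mult_nonneg_nonpos)
  also have "0 \<le> (\<Sum>p<P. max 0 (\<omega> p - t0))" by (intro sum_nonneg) auto
  finally show ?thesis .
next
  case False
  let ?X = "kth_smallest K P \<omega>"
  define A where "A = {p. p < P \<and> \<omega> p < ?X}"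
  define B where "B = {p. p < P \<and> ?X \<le> \<omega> p}"
  have cA: "card A \<le> K - 1"
  proof (rule ccontr)
    assume "\<not> card A \<le> K - 1"
    then have cK: "K \<le> card A" by auto
    then have "A \<noteq> {}" using assms by auto
    have finA: "finite A" unfolding A_def by auto
    define t where "t = Max (\<omega> ` A)"
    have "t \<in> \<omega> ` A" unfolding t_def using finA \<open>A \<noteq> {}\<close> by (intro Max_in) auto
    then have "t < ?X" unfolding A_def by auto
    have "A \<subseteq> {p. p < P \<and> \<omega> p \<le> t}" unfolding t_def using finA
      by (auto intro!: Max_ge simp: A_def)
    then have "card A \<le> card {p. p < P \<and> \<omega> p \<le> t}" by (intro card_mono) auto
    then have "?X \<le> t" using kth_le_iff[OF assms] cK by auto
    then show False using \<open>t < ?X\<close> by auto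
  qed
  have "A \<union> B = {..<P}" "A \<inter> B = {}" unfolding A_def B_def by auto
  then have "card A + card B = P"
  proof -
    have "card (A \<union> B) = card A + card B" using \<open>A \<inter> B = {}\<close> by (intro card_Un_disjoint) (auto simp: A_def B_def)
    then show ?thesis using \<open>A \<union> B = {..<P}\<close> by simp
  qed
  then have cB: "P - K + 1 \<le> card B" using cA assms by linarith
  have "real (P - K + 1) * (?X - t0) \<le> real (card B) * (?X - t0)"
    using cB False by (intro mult_right_mono) auto
  also have "\<dots> = (\<Sum>p\<in>B. ?X - t0)" by simp
  also have "\<dots> \<le> (\<Sum>p\<in>B. max 0 (\<omega> p - t0))"
    by (intro sum_mono) (auto simp: B_def)
  also have "\<dots> \<le> (\<Sum>p<P. max 0 (\<omega> p - t0))"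
    by (intro sum_mono2) (auto simp: B_def)
  finally show ?thesis .
qed



lemma sexp_cdf_max: "l > 0 \<Longrightarrow> mu > 0 \<Longrightarrow> sexp_cdf mu l t = max 0 (1 - exp (- mu * (t / l - 1)))"
proof -
  assume l: "l > 0" and mu: "mu > 0"
  show ?thesis
  proof (cases "t < l")
    case True
    then have "t / l < 1" using l by (simp add: divide_less_eq)
    then have "- mu * (t / l - 1) > 0" using mu by (simp add: mult_pos_neg)
    then have "exp (- mu * (t / l - 1)) > 1" by simp
    then show ?thesis using True by (simp add: sexp_cdf_def)
  next
    case False
    then have "t / l \<ge> 1" using l by (simp add: le_divide_eq)
    then have "- mu * (t / l - 1) \<le> 0" using mu by (simp add: mult_nonneg_nonpos)
    then have "exp (- mu * (t / l - 1)) \<le> 1" by simp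
    then show ?thesis using False by (simp add: sexp_cdf_def)
  qed
qed

lemma sexp_cdf_props:
  assumes l: "l > 0" and mu: "mu > 0"
  shows "\<And>x y. x \<le> y \<Longrightarrow> sexp_cdf mu l x \<le> sexp_cdf mu l y"
    and "\<And>a. continuous (at_right a) (sexp_cdf mu l)"
    and "(sexp_cdf mu l \<longlongrightarrow> 0) at_bot"
    and "(sexp_cdf mu l \<longlongrightarrow> 1) at_top"
proof -
  have eq: "sexp_cdf mu l = (\<lambda>t. max 0 (1 - exp (- mu * (t / l - 1))))"
    using sexp_cdf_max[OF l mu] by auto
  show "\<And>x y. x \<le> y \<Longrightarrow> sexp_cdf mu l x \<le> sexp_cdf mu l y"
  proof -
    fix x y :: real assume "x \<le> y"
    then have "x / l \<le> y / l" using l by (simp add: divide_right_mono)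
    then have "- mu * (y / l - 1) \<le> - mu * (x / l - 1)" using mu by (simp add: mult_left_mono)
    then have "exp (- mu * (y / l - 1)) \<le> exp (- mu * (x / l - 1))" by simp
    then show "sexp_cdf mu l x \<le> sexp_cdf mu l y" unfolding eq by (simp add: max_def)
  qed
  show "\<And>a. continuous (at_right a) (sexp_cdf mu l)"
    unfolding eq by (intro continuous_intros) (use l in simp)
  show "(sexp_cdf mu l \<longlongrightarrow> 0) at_bot"
  proof (rule tendsto_eventually)
    show "\<forall>\<^sub>F x in at_bot. sexp_cdf mu l x = 0"
      unfolding eventually_at_bot_linorder by (intro exI[of _ "l - 1"]) (auto simp: sexp_cdf_def)
  qed
  show "(sexp_cdf mu l \<longlongrightarrow> 1) at_top"
  proof -
    have "((\<lambda>t. 1 - exp (- mu * (t / l - 1))) \<longlongrightarrow> 1) at_top"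
      using l mu by real_asymp
    moreover have "\<forall>\<^sub>F t in at_top. 1 - exp (- mu * (t / l - 1)) = sexp_cdf mu l t"
      unfolding eventually_at_top_linorder by (intro exI[of _ l]) (auto simp: sexp_cdf_def)
    ultimately show ?thesis by (rule Lim_transform_eventually)
  qed
qed

lemma sexp_real_distribution: "l > 0 \<Longrightarrow> mu > 0 \<Longrightarrow> real_distribution (sexp_time mu l)"
  unfolding sexp_time_def using sexp_cdf_props by (intro real_distribution_interval_measure) auto

lemma sexp_prob_space: "l > 0 \<Longrightarrow> mu > 0 \<Longrightarrow> prob_space (sexp_time mu l)"
  using sexp_real_distribution real_distribution_def by blast

lemma sets_sexp_time[simp, measurable_cong]: "sets (sexp_time mu l) = sets borel"
  unfolding sexp_time_def by simp

lemma space_sexp_time[simp]: "space (sexp_time mu l) = UNIV"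
  unfolding sexp_time_def by simp

lemma sexp_measure_Iic: "l > 0 \<Longrightarrow> mu > 0 \<Longrightarrow> measure (sexp_time mu l) {..x} = sexp_cdf mu l x"
  unfolding sexp_time_def using sexp_cdf_props by (intro measure_interval_measure_Iic) auto

lemma sexp_emeasure_Ioi:
  assumes l: "l > 0" and mu: "mu > 0" and x: "x \<ge> l"
  shows "emeasure (sexp_time mu l) {x<..} = ennreal (exp (- mu * (x / l - 1)))"
proof -
  interpret prob_space "sexp_time mu l" using sexp_prob_space[OF l mu] .
  have "{x<..} = space (sexp_time mu l) - {..x}" by auto
  moreover have "prob (space (sexp_time mu l) - {..x}) = 1 - prob {..x}" by (rule prob_compl) simp
  ultimately have "prob {x<..} = 1 - prob {..x}" by simp
  also have "\<dots> = exp (- mu * (x / l - 1))" using sexp_measure_Iic[OF l mu] x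
    by (simp add: sexp_cdf_def)
  finally show ?thesis by (simp add: emeasure_eq_measure)
qed

lemma sexp_AE_ge: "l > 0 \<Longrightarrow> mu > 0 \<Longrightarrow> AE x in sexp_time mu l. l \<le> x"
proof -
  assume l: "l > 0" and mu: "mu > 0"
  interpret prob_space "sexp_time mu l" using sexp_prob_space[OF l mu] .
  have a: "prob {..<l} \<le> prob {..l}" by (rule finite_measure_mono) auto
  have b: "prob {..l} = 0" using sexp_measure_Iic[OF l mu, of l] l mu by (simp add: sexp_cdf_def)
  have c: "0 \<le> prob {..<l}" by (rule measure_nonneg)
  have "prob {..<l} = 0" using a b c by linarith
  then have e0: "emeasure (sexp_time mu l) {..<l} = 0" by (simp add: emeasure_eq_measure)
  have sub: "{x \<in> space (sexp_time mu l). \<not> l \<le> x} \<subseteq> {..<l}" by auto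
  show ?thesis by (rule AE_I[OF sub e0]) simp
qed



lemma tail_pw:
  fixes y c \<delta> :: real
  assumes d: "\<delta> > 0"
  shows "ennreal (max 0 (y - c)) \<le> ennreal \<delta> * (\<Sum>k. indicator {c + real k * \<delta><..} y)"
proof (cases "y \<le> c")
  case True
  then show ?thesis by simp
next
  case False
  define n where "n = nat \<lceil>(y - c) / \<delta>\<rceil>"
  have n1: "(y - c) / \<delta> \<le> real n" unfolding n_def by linarith
  have n2: "real k < (y - c) / \<delta>" if "k < n" for k
  proof -
    have "real k + 1 \<le> real n" using that by linarith
    moreover have "real n < (y - c) / \<delta> + 1"
    proof -
      have "(y - c) / \<delta> > 0" using False d by simp
      then have "real n = real_of_int \<lceil>(y - c) / \<delta>\<rceil>" unfolding n_def by simp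
      then show ?thesis by linarith
    qed
    ultimately show ?thesis by linarith
  qed
  have ind: "indicator {c + real k * \<delta><..} y = (1::ennreal)" if "k < n" for k
  proof -
    have "real k * \<delta> < y - c" using n2[OF that] d by (simp add: pos_less_divide_eq)
    then show ?thesis by (simp add: indicator_def)
  qed
  have "ennreal (max 0 (y - c)) \<le> ennreal (\<delta> * real n)"
    using n1 d False by (intro ennreal_leI) (simp add: pos_divide_le_eq mult.commute)
  also have "\<dots> = ennreal \<delta> * (\<Sum>k<n. indicator {c + real k * \<delta><..} y)"
    using ind d by (simp add: ennreal_mult ennreal_of_nat_eq_real_of_nat)
  also have "\<dots> \<le> ennreal \<delta> * (\<Sum>k. indicator {c + real k * \<delta><..} y)"
    by (intro mult_left_mono sum_le_suminf) auto
  finally show ?thesis .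
qed

lemma nn_tail:
  fixes c \<delta> :: real
  assumes d: "\<delta> > 0" and sQ: "sets Q = sets borel"
  shows "(\<integral>\<^sup>+y. ennreal (max 0 (y - c)) \<partial>Q) \<le> ennreal \<delta> * (\<Sum>k. emeasure Q {c + real k * \<delta><..})"
proof -
  have "(\<integral>\<^sup>+y. ennreal (max 0 (y - c)) \<partial>Q) \<le> (\<integral>\<^sup>+y. ennreal \<delta> * (\<Sum>k. indicator {c + real k * \<delta><..} y) \<partial>Q)"
    by (intro nn_integral_mono tail_pw d)
  also have "\<dots> = ennreal \<delta> * (\<integral>\<^sup>+y. (\<Sum>k. indicator {c + real k * \<delta><..} y) \<partial>Q)"
    using sQ by (intro nn_integral_cmult) (simp add: measurable_cong_sets[OF sQ refl])
  also have "(\<integral>\<^sup>+y. (\<Sum>k. indicator {c + real k * \<delta><..} y) \<partial>Q) = (\<Sum>k. \<integral>\<^sup>+y. indicator {c + real k * \<delta><..} y \<partial>Q)"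
    by (intro nn_integral_suminf) (simp add: measurable_cong_sets[OF sQ refl])
  also have "\<dots> = (\<Sum>k. emeasure Q {c + real k * \<delta><..})"
    using sQ by (intro suminf_cong nn_integral_indicator) auto
  finally show ?thesis .
qed

lemma sexp_tail:
  assumes l: "l > 0" and mu: "mu > 0" and c: "c \<ge> l"
  shows "(\<integral>\<^sup>+y. ennreal (max 0 (y - c)) \<partial>sexp_time mu l) \<le> ennreal (2 * (l / mu) * exp (- mu * (c / l - 1)))"
proof -
  define E where "E = exp (- mu * (c / l - 1))"
  define q where "q = exp (-1::real)"
  have q0: "0 \<le> q" "q < 1" unfolding q_def by auto
  have q2: "q \<le> 1/2"
  proof -
    have "2 \<le> exp (1::real)" using exp_ge_add_one_self[of 1] by simp
    then show ?thesis unfolding q_def by (simp add: exp_minus field_simps)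
  qed
  have dpos: "l / mu > 0" using l mu by simp
  have em: "emeasure (sexp_time mu l) {c + real k * (l / mu)<..} = ennreal (E * q ^ k)" for k
  proof -
    have "real k * (l / mu) \<ge> 0" using dpos by (intro mult_nonneg_nonneg) auto
    then have "c + real k * (l / mu) \<ge> l" using c by linarith
    then have "emeasure (sexp_time mu l) {c + real k * (l / mu)<..} = ennreal (exp (- mu * ((c + real k * (l / mu)) / l - 1)))"
      by (rule sexp_emeasure_Ioi[OF l mu])
    also have "- mu * ((c + real k * (l / mu)) / l - 1) = - mu * (c / l - 1) + real k * (-1)"
      using l mu by (simp add: field_simps)
    also have "exp (\<dots>) = E * q ^ k"
    proof -
      have "exp (- mu * (c / l - 1) + real k * (-1)) = exp (- mu * (c / l - 1)) * exp (real k * (-1))"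
        by (rule exp_add)
      also have "exp (real k * (-1)) = exp (-1) ^ k" by (rule exp_of_nat_mult)
      finally show ?thesis unfolding E_def q_def .
    qed
    finally show ?thesis .
  qed
  have "(\<integral>\<^sup>+y. ennreal (max 0 (y - c)) \<partial>sexp_time mu l) \<le> ennreal (l / mu) * (\<Sum>k. emeasure (sexp_time mu l) {c + real k * (l / mu)<..})"
    by (intro nn_tail dpos) simp
  also have "(\<Sum>k. emeasure (sexp_time mu l) {c + real k * (l / mu)<..}) = ennreal (E * (1 / (1 - q)))"
    unfolding em using q0 by (intro suminf_ennreal_eq sums_mult geometric_sums) (auto simp: E_def)
  also have "ennreal (l / mu) * ennreal (E * (1 / (1 - q))) = ennreal (l / mu * (E * (1 / (1 - q))))"
    using dpos q0 by (intro ennreal_mult[symmetric]) (auto simp: E_def)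
  also have "\<dots> \<le> ennreal (2 * (l / mu) * E)"
  proof (intro ennreal_leI)
    have "1 / (1 - q) \<le> 2" using q0 q2 by (simp add: field_simps)
    then have h: "E * (1 / (1 - q)) \<le> E * 2" by (intro mult_left_mono) (auto simp: E_def)
    have "l / mu * (E * (1 / (1 - q))) \<le> l / mu * (E * 2)"
      by (rule mult_left_mono[OF h less_imp_le[OF dpos]])
    also have "\<dots> = 2 * (l / mu) * E" by simp
    finally show "l / mu * (E * (1 / (1 - q))) \<le> 2 * (l / mu) * E" .
  qed
  finally show ?thesis unfolding E_def .
qed



lemma meas_sexp[simp]: "measurable (sexp_time mu l) N = measurable borel N"
  by (rule measurable_cong_sets) auto

lemma ps_prob: "\<forall>p<P. len p > 0 \<Longrightarrow> mu > 0 \<Longrightarrow> prob_space (proc_space mu len P)"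
  unfolding proc_space_def by (intro prob_space_PiM sexp_prob_space) auto

lemma ps_space: "space (proc_space mu len P) = PiE {..<P} (\<lambda>_. UNIV)"
  unfolding proc_space_def by (simp add: space_PiM)

lemma ps_sets: "sets (proc_space mu len P) = sets (PiM {..<P} (\<lambda>_. borel))"
  unfolding proc_space_def by (rule sets_PiM_cong) simp_all

lemma ps_meas_comp[measurable]: "p < P \<Longrightarrow> (\<lambda>\<omega>. \<omega> p) \<in> borel_measurable (proc_space mu len P)"
  unfolding measurable_cong_sets[OF ps_sets refl]
  by (rule measurable_component_singleton[where M="\<lambda>_. borel", simplified]) simp

lemma ps_distr:
  assumes "\<forall>p<P. len p > 0" "mu > 0" "p < P"
  shows "distr (proc_space mu len P) (sexp_time mu (len p)) (\<lambda>\<omega>. \<omega> p) = sexp_time mu (len p)"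
  unfolding proc_space_def using assms by (intro distr_PiM_component sexp_prob_space) auto

lemma ps_nn_comp:
  assumes "\<forall>p<P. len p > 0" "mu > 0" "p < P" "f \<in> borel_measurable borel"
  shows "(\<integral>\<^sup>+\<omega>. f (\<omega> p) \<partial>proc_space mu len P) = (\<integral>\<^sup>+y. f y \<partial>sexp_time mu (len p))"
proof -
  have "(\<integral>\<^sup>+y. f y \<partial>sexp_time mu (len p)) = (\<integral>\<^sup>+y. f y \<partial>distr (proc_space mu len P) (sexp_time mu (len p)) (\<lambda>\<omega>. \<omega> p))"
    using ps_distr[OF assms(1-3)] by simp
  also have "\<dots> = (\<integral>\<^sup>+\<omega>. f (\<omega> p) \<partial>proc_space mu len P)"
    using assms by (intro nn_integral_distr) (auto simp: meas_sexp)
  finally show ?thesis by simp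
qed

lemma ps_AE:
  assumes "\<forall>p<P. len p > 0" "mu > 0"
  shows "AE \<omega> in proc_space mu len P. \<forall>p<P. len p \<le> \<omega> p"
proof -
  have "AE \<omega> in proc_space mu len P. \<forall>p\<in>{..<P}. len p \<le> \<omega> p"
    unfolding proc_space_def
    by (intro eventually_ball_finite ballI AE_PiM_component sexp_prob_space sexp_AE_ge) (use assms in auto)
  then show ?thesis by auto
qed

lemma sexp_integrable:
  assumes l: "l > 0" and mu: "mu > 0"
  shows "integrable (sexp_time mu l) (\<lambda>x. x)"
proof (rule integrableI_bounded)
  show "(\<lambda>x. x) \<in> borel_measurable (sexp_time mu l)" by (rule measurable_ident_sets) simp
  have "(\<integral>\<^sup>+x. ennreal (norm x) \<partial>sexp_time mu l) = (\<integral>\<^sup>+x. ennreal l + ennreal (max 0 (x - l)) \<partial>sexp_time mu l)"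
  proof (rule nn_integral_cong_AE)
    show "AE x in sexp_time mu l. ennreal (norm x) = ennreal l + ennreal (max 0 (x - l))"
      using sexp_AE_ge[OF l mu]
    proof eventually_elim
      case (elim x)
      then show ?case using l by (simp add: ennreal_plus[symmetric] del: ennreal_plus)
    qed
  qed
  also have "\<dots> = (\<integral>\<^sup>+x. ennreal l \<partial>sexp_time mu l) + (\<integral>\<^sup>+x. ennreal (max 0 (x - l)) \<partial>sexp_time mu l)"
    by (intro nn_integral_add) (simp_all add: meas_sexp)
  also have "\<dots> < \<infinity>"
  proof -
    interpret prob_space "sexp_time mu l" using sexp_prob_space[OF l mu] .
    have "(\<integral>\<^sup>+x. ennreal (max 0 (x - l)) \<partial>sexp_time mu l) < \<infinity>"
      using sexp_tail[OF l mu order_refl] by (simp add: le_less_trans)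
    moreover have "emeasure (sexp_time mu l) UNIV = 1" using emeasure_space_1 by simp
    ultimately show ?thesis by simp
  qed
  finally show "(\<integral>\<^sup>+x. ennreal (norm x) \<partial>sexp_time mu l) < \<infinity>" .
qed

lemma ps_integrable_comp:
  assumes "\<forall>p<P. len p > 0" "mu > 0" "p < P"
  shows "integrable (proc_space mu len P) (\<lambda>\<omega>. \<omega> p)"
proof -
  have "integrable (distr (proc_space mu len P) (sexp_time mu (len p)) (\<lambda>\<omega>. \<omega> p)) (\<lambda>x. x)"
    unfolding ps_distr[OF assms] using sexp_integrable assms by simp
  then show ?thesis
    using assms by (subst (asm) integrable_distr_eq) (auto simp: meas_sexp)
qed

lemma ps_integrable_bound:
  assumes "\<forall>p<P. len p > 0" "mu > 0"
    and f: "f \<in> borel_measurable (proc_space mu len P)"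
    and b: "\<And>\<omega>. \<omega> \<in> space (proc_space mu len P) \<Longrightarrow> \<bar>f \<omega>\<bar> \<le> (\<Sum>p<P. \<bar>\<omega> p\<bar>)"
  shows "integrable (proc_space mu len P) f"
proof -
  have i: "integrable (proc_space mu len P) (\<lambda>\<omega>. \<Sum>p<P. \<bar>\<omega> p\<bar>)"
    apply (rule Bochner_Integration.integrable_sum)
    apply (rule integrable_abs)
    using ps_integrable_comp[OF assms(1,2)] by auto
  have a: "AE \<omega> in proc_space mu len P. norm (f \<omega>) \<le> norm (\<Sum>p<P. \<bar>\<omega> p\<bar>)"
    using b by (intro AE_I2) (simp add: sum_nonneg)
  show ?thesis by (rule Bochner_Integration.integrable_bound[OF i f a])
qed



lemma SD_bound:
  assumes mu: "mu > 0" and s: "s > 0" and K: "1 \<le> K" "K \<le> P" and a: "a \<ge> 0"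
  shows "integral\<^sup>L (proc_space mu (\<lambda>p. s) P) (kth_smallest K P)
           \<le> s * (1 + a / mu) + real P / real (P - K + 1) * (2 * (s / mu) * exp (- a))"
proof -
  define m where "m = real (P - K + 1)"
  define t0 where "t0 = s * (1 + a / mu)"
  define G where "G = 2 * (s / mu) * exp (- a)"
  define Q where "Q = proc_space mu (\<lambda>p. s) P"
  have lp: "\<forall>p<P. (\<lambda>p. s) p > 0" using s by simp
  interpret Q: prob_space Q unfolding Q_def by (rule ps_prob[OF lp mu])
  have m0: "m > 0" unfolding m_def by simp
  have t0s: "t0 \<ge> s" unfolding t0_def using s mu a by (simp add: mult_nonneg_nonneg)
  have G0: "G \<ge> 0" unfolding G_def using s mu by simp
  have t0eq: "- mu * (t0 / s - 1) = - a" unfolding t0_def using s mu by (simp add: field_simps)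
  have comp: "(\<integral>\<^sup>+\<omega>. ennreal (max 0 (\<omega> p - t0)) \<partial>Q) \<le> ennreal G" if p: "p < P" for p
  proof -
    have "(\<integral>\<^sup>+\<omega>. ennreal (max 0 (\<omega> p - t0)) \<partial>Q) = (\<integral>\<^sup>+y. ennreal (max 0 (y - t0)) \<partial>sexp_time mu s)"
      unfolding Q_def using ps_nn_comp[OF lp mu p, of "\<lambda>y. ennreal (max 0 (y - t0))"] by simp
    also have "\<dots> \<le> ennreal (2 * (s / mu) * exp (- mu * (t0 / s - 1)))"
      by (rule sexp_tail[OF s mu t0s])
    also have "\<dots> = ennreal G" unfolding t0eq G_def ..
    finally show ?thesis .
  qed
  have pw: "ennreal (kth_smallest K P \<omega>) \<le> ennreal t0 + ennreal (1 / m) * (\<Sum>p<P. ennreal (max 0 (\<omega> p - t0)))" for \<omega>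
  proof -
    have h: "m * (kth_smallest K P \<omega> - t0) \<le> (\<Sum>p<P. max 0 (\<omega> p - t0))"
      unfolding m_def by (rule kth_pw_bound[OF K])
    have S0: "0 \<le> (\<Sum>p<P. max 0 (\<omega> p - t0))" by (intro sum_nonneg) auto
    have "kth_smallest K P \<omega> \<le> t0 + (1 / m) * (\<Sum>p<P. max 0 (\<omega> p - t0))"
      using h m0 by (simp add: field_simps)
    then have "ennreal (kth_smallest K P \<omega>) \<le> ennreal (t0 + (1 / m) * (\<Sum>p<P. max 0 (\<omega> p - t0)))"
      by (rule ennreal_leI)
    also have "\<dots> = ennreal t0 + ennreal (1 / m) * ennreal (\<Sum>p<P. max 0 (\<omega> p - t0))"
    proof -
      have "ennreal (t0 + (1 / m) * (\<Sum>p<P. max 0 (\<omega> p - t0))) = ennreal t0 + ennreal ((1 / m) * (\<Sum>p<P. max 0 (\<omega> p - t0)))"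
        by (rule ennreal_plus) (use t0s s m0 S0 in auto)
      also have "ennreal ((1 / m) * (\<Sum>p<P. max 0 (\<omega> p - t0))) = ennreal (1 / m) * ennreal (\<Sum>p<P. max 0 (\<omega> p - t0))"
        by (rule ennreal_mult) (use m0 S0 in auto)
      finally show ?thesis .
    qed
    also have "ennreal (\<Sum>p<P. max 0 (\<omega> p - t0)) = (\<Sum>p<P. ennreal (max 0 (\<omega> p - t0)))"
      by (rule sum_ennreal[symmetric]) auto
    finally show ?thesis .
  qed
  have "(\<integral>\<^sup>+\<omega>. ennreal (kth_smallest K P \<omega>) \<partial>Q)
        \<le> (\<integral>\<^sup>+\<omega>. ennreal t0 + ennreal (1 / m) * (\<Sum>p<P. ennreal (max 0 (\<omega> p - t0))) \<partial>Q)"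
    by (intro nn_integral_mono pw)
  also have "\<dots> = (\<integral>\<^sup>+\<omega>. ennreal t0 \<partial>Q) + (\<integral>\<^sup>+\<omega>. ennreal (1 / m) * (\<Sum>p<P. ennreal (max 0 (\<omega> p - t0))) \<partial>Q)"
    unfolding Q_def by (intro nn_integral_add) measurable
  also have "(\<integral>\<^sup>+\<omega>. ennreal t0 \<partial>Q) = ennreal t0"
    using Q.emeasure_space_1 by simp
  also have "(\<integral>\<^sup>+\<omega>. ennreal (1 / m) * (\<Sum>p<P. ennreal (max 0 (\<omega> p - t0))) \<partial>Q)
      = ennreal (1 / m) * (\<integral>\<^sup>+\<omega>. (\<Sum>p<P. ennreal (max 0 (\<omega> p - t0))) \<partial>Q)"
    unfolding Q_def by (intro nn_integral_cmult) measurable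
  also have "(\<integral>\<^sup>+\<omega>. (\<Sum>p<P. ennreal (max 0 (\<omega> p - t0))) \<partial>Q) = (\<Sum>p<P. \<integral>\<^sup>+\<omega>. ennreal (max 0 (\<omega> p - t0)) \<partial>Q)"
    unfolding Q_def by (intro nn_integral_sum) measurable
  also have "\<dots> \<le> (\<Sum>p<P. ennreal G)"
    by (intro sum_mono comp) simp
  also have "(\<Sum>p<P. ennreal G) = ennreal (real P * G)"
    using G0 by (simp add: ennreal_of_nat_eq_real_of_nat ennreal_mult)
  also have "ennreal t0 + ennreal (1 / m) * ennreal (real P * G) = ennreal (t0 + 1 / m * (real P * G))"
  proof -
    have "ennreal (t0 + 1 / m * (real P * G)) = ennreal t0 + ennreal (1 / m * (real P * G))"
      by (rule ennreal_plus) (use t0s s m0 G0 in auto)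
    also have "ennreal (1 / m * (real P * G)) = ennreal (1 / m) * ennreal (real P * G)"
      by (rule ennreal_mult) (use m0 G0 in auto)
    finally show ?thesis by simp
  qed
  finally have nn: "(\<integral>\<^sup>+\<omega>. ennreal (kth_smallest K P \<omega>) \<partial>Q) \<le> ennreal (t0 + 1 / m * (real P * G))"
    by (simp add: mult_left_mono add_left_mono)
  have "integral\<^sup>L Q (kth_smallest K P) \<le> t0 + 1 / m * (real P * G)"
    by (rule integral_real_bounded) (use t0s s m0 G0 nn in auto)
  then show ?thesis unfolding Q_def t0_def G_def m_def by simp
qed



lemma card_sum_if: "real (card {p. p < (P::nat) \<and> Q p}) = (\<Sum>p<P. if Q p then 1 else (0::real))"
proof -
  have "(\<Sum>p<P. if Q p then 1 else (0::real)) = (\<Sum>p\<in>{p\<in>{..<P}. Q p}. 1)"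
    by (rule sum.inter_filter[symmetric]) simp
  also have "{p\<in>{..<P}. Q p} = {p. p < P \<and> Q p}" by auto
  finally show ?thesis by simp
qed

lemma kth_meas:
  assumes K: "1 \<le> K" "K \<le> P"
  shows "kth_smallest K P \<in> borel_measurable (proc_space mu len P)"
  unfolding borel_measurable_iff_le
proof
  fix a :: real
  have "{w \<in> space (proc_space mu len P). kth_smallest K P w \<le> a}
      = {w \<in> space (proc_space mu len P). real K \<le> (\<Sum>p<P. if w p \<le> a then 1 else (0::real))}"
    by (simp add: kth_le_iff[OF K] card_sum_if[symmetric])
  also have "\<dots> \<in> sets (proc_space mu len P)" by measurable
  finally show "{w \<in> space (proc_space mu len P). kth_smallest K P w \<le> a} \<in> sets (proc_space mu len P)" .
qed

lemma LB_generic: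
  assumes lp: "\<forall>p<P. len p > 0" and mu: "mu > 0"
    and f: "f \<in> borel_measurable (proc_space mu len P)"
    and b: "\<And>\<omega>. \<bar>f \<omega>\<bar> \<le> (\<Sum>p<P. \<bar>\<omega> p\<bar>)"
    and low: "\<And>\<omega>. (\<forall>p<P. len p \<le> \<omega> p) \<Longrightarrow> c \<le> f \<omega>"
  shows "c \<le> integral\<^sup>L (proc_space mu len P) f"
proof -
  interpret prob_space "proc_space mu len P" by (rule ps_prob[OF lp mu])
  have i: "integrable (proc_space mu len P) f" by (rule ps_integrable_bound[OF lp mu f b])
  have "AE \<omega> in proc_space mu len P. c \<le> f \<omega>"
    using ps_AE[OF lp mu] by eventually_elim (rule low)
  then show ?thesis by (rule integral_ge_const[OF i])
qed

lemma mem_abs_le_sum: "p < (P::nat) \<Longrightarrow> \<bar>(\<omega>::nat\<Rightarrow>real) p\<bar> \<le> (\<Sum>q<P. \<bar>\<omega> q\<bar>)"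
  by (rule member_le_sum) auto

lemma MDS_LB:
  assumes mu: "mu > 0" and n: "n > 0" and K: "1 \<le> K" "K \<le> P"
  shows "n \<le> integral\<^sup>L (proc_space mu (\<lambda>p. n) P) (kth_smallest K P)"
proof (rule LB_generic)
  show "\<forall>p<P. (\<lambda>p. n) p > 0" using n by simp
  show "kth_smallest K P \<in> borel_measurable (proc_space mu (\<lambda>p. n) P)" by (rule kth_meas[OF K])
  show "\<bar>kth_smallest K P \<omega>\<bar> \<le> (\<Sum>p<P. \<bar>\<omega> p\<bar>)" for \<omega>
    using kth_mem[OF K, of \<omega>] mem_abs_le_sum by auto
  show "n \<le> kth_smallest K P \<omega>" if "\<forall>p<P. n \<le> \<omega> p" for \<omega>
    using kth_mem[OF K, of \<omega>] that by auto
qed (rule mu)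

lemma Rep_LB:
  assumes mu: "mu > 0" and n: "n > 0" and M: "(M::nat) \<ge> 1"
    and ne: "\<And>i. i < M \<Longrightarrow> {p. p < P \<and> asg p = i} \<noteq> {}"
  shows "n \<le> integral\<^sup>L (proc_space mu (\<lambda>p. n) P)
                 (\<lambda>\<omega>. Max ((\<lambda>i. Min (\<omega> ` {p. p < P \<and> asg p = i})) ` {..<M}))"
proof (rule LB_generic)
  show "\<forall>p<P. (\<lambda>p. n) p > 0" using n by simp
  show "(\<lambda>\<omega>. Max ((\<lambda>i. Min (\<omega> ` {p. p < P \<and> asg p = i})) ` {..<M})) \<in> borel_measurable (proc_space mu (\<lambda>p. n) P)"
  proof (rule borel_measurable_Max)
    fix i assume "i \<in> {..<M}"
    show "(\<lambda>\<omega>. Min (\<omega> ` {p. p < P \<and> asg p = i})) \<in> borel_measurable (proc_space mu (\<lambda>p. n) P)"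
      by (rule borel_measurable_Min[where f="\<lambda>p \<omega>. \<omega> p", simplified]) auto
  qed simp
  have inS: "\<exists>p<P. Max ((\<lambda>i. Min (\<omega> ` {p. p < P \<and> asg p = i})) ` {..<M}) = \<omega> p" for \<omega> :: "nat \<Rightarrow> real"
  proof -
    have "Max ((\<lambda>i. Min (\<omega> ` {p. p < P \<and> asg p = i})) ` {..<M}) \<in> (\<lambda>i. Min (\<omega> ` {p. p < P \<and> asg p = i})) ` {..<M}"
      using M by (intro Max_in) (auto simp: lessThan_empty_iff)
    then obtain i where i: "i < M" "Max ((\<lambda>i. Min (\<omega> ` {p. p < P \<and> asg p = i})) ` {..<M}) = Min (\<omega> ` {p. p < P \<and> asg p = i})"
      by auto
    have "Min (\<omega> ` {p. p < P \<and> asg p = i}) \<in> \<omega> ` {p. p < P \<and> asg p = i}"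
      using ne[OF i(1)] by (intro Min_in) auto
    then show ?thesis using i by auto
  qed
  show "\<bar>Max ((\<lambda>i. Min (\<omega> ` {p. p < P \<and> asg p = i})) ` {..<M})\<bar> \<le> (\<Sum>p<P. \<bar>\<omega> p\<bar>)" for \<omega> :: "nat \<Rightarrow> real"
  proof -
    from inS[of \<omega>] obtain p where p: "p < P" "Max ((\<lambda>i. Min (\<omega> ` {p. p < P \<and> asg p = i})) ` {..<M}) = \<omega> p"
      by blast
    show ?thesis unfolding p(2) by (rule mem_abs_le_sum[OF p(1)])
  qed
  show "n \<le> Max ((\<lambda>i. Min (\<omega> ` {p. p < P \<and> asg p = i})) ` {..<M})" if h: "\<forall>p<P. n \<le> \<omega> p" for \<omega> :: "nat \<Rightarrow> real"
    using inS[of \<omega>] h by auto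
qed (rule mu)



lemma UC_LB:
  assumes mu: "mu > 0" and L: "L > 0" and lp: "\<forall>p<P. L \<le> len p" and P: "P \<ge> 1" and a: "a \<ge> 0"
  shows "L + L * (a / mu) * (1 - (1 - exp (- a)) ^ P) \<le> integral\<^sup>L (proc_space mu len P) (\<lambda>\<omega>. Max (\<omega> ` {..<P}))"
proof -
  have lpos: "\<forall>p<P. len p > 0" using lp L by (auto intro: less_le_trans)
  define Q where "Q = proc_space mu len P"
  interpret Q: prob_space Q unfolding Q_def by (rule ps_prob[OF lpos mu])
  define len' where "len' p = (if p < P then len p else 1)" for p
  have len'pos: "len' p > 0" for p unfolding len'_def using lpos by auto
  have QE: "Q = PiM {..<P} (\<lambda>p. sexp_time mu (len' p))"
    unfolding Q_def proc_space_def by (rule PiM_cong) (auto simp: len'_def)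
  interpret pp: product_prob_space "\<lambda>p. sexp_time mu (len' p)" "{..<P}"
    by (rule product_prob_spaceI) (rule sexp_prob_space[OF len'pos mu])
  define t1 where "t1 = L * (1 + a / mu)"
  have t1L: "t1 - L = L * (a / mu)" unfolding t1_def by (simp add: algebra_simps)
  have t1L0: "t1 - L \<ge> 0" unfolding t1L using L mu a by simp
  define B where "B = PiE {..<P} (\<lambda>_. {..t1})"
  have Bsets: "B \<in> sets Q" unfolding B_def QE by (intro sets_PiM_I_finite) auto
  have spQ: "space Q = PiE {..<P} (\<lambda>_. UNIV)" unfolding Q_def by (rule ps_space)
  have Fp: "measure (sexp_time mu (len' p)) {..t1} \<le> 1 - exp (- a)" if p: "p < P" for p
  proof -
    have lp': "len' p = len p" "L \<le> len p" "len p > 0" using p lp lpos by (auto simp: len'_def)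
    have "t1 / len p \<le> t1 / L"
      using lp' L t1L0 by (intro divide_left_mono) (auto simp: mult_pos_pos)
    also have "t1 / L = 1 + a / mu" unfolding t1_def using L by simp
    finally have h1: "t1 / len p \<le> 1 + a / mu" .
    have "mu * (t1 / len p) \<le> mu * (1 + a / mu)" using h1 mu by (intro mult_left_mono) auto
    also have "mu * (1 + a / mu) = mu + a" using mu by (simp add: field_simps)
    finally have h2: "mu * (t1 / len p) \<le> mu + a" .
    have "- mu * (t1 / len p - 1) = mu - mu * (t1 / len p)" by (simp add: algebra_simps)
    then have "- a \<le> - mu * (t1 / len p - 1)" using h2 by linarith
    then have "exp (- a) \<le> exp (- mu * (t1 / len p - 1))" by simp
    moreover have "0 \<le> 1 - exp (- a)" using a by simp
    ultimately have "sexp_cdf mu (len p) t1 \<le> 1 - exp (- a)"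
      using sexp_cdf_max[OF lp'(3) mu, of t1] by simp
    then show ?thesis using sexp_measure_Iic[OF len'pos mu, of p t1] lp'(1) by simp
  qed
  have "emeasure Q B = (\<Prod>p<P. emeasure (sexp_time mu (len' p)) {..t1})"
    unfolding QE B_def by (intro pp.emeasure_PiM) auto
  also have "\<dots> = (\<Prod>p<P. ennreal (measure (sexp_time mu (len' p)) {..t1}))"
  proof (intro prod.cong refl)
    fix p
    show "emeasure (sexp_time mu (len' p)) {..t1} = ennreal (measure (sexp_time mu (len' p)) {..t1})"
      by (rule finite_measure.emeasure_eq_measure[OF prob_space.finite_measure[OF sexp_prob_space[OF len'pos mu]]])
  qed
  also have "\<dots> = ennreal (\<Prod>p<P. measure (sexp_time mu (len' p)) {..t1})"
    by (rule prod_ennreal) simp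
  finally have "ennreal (measure Q B) = ennreal (\<Prod>p<P. measure (sexp_time mu (len' p)) {..t1})"
    using Q.emeasure_eq_measure by simp
  then have mB: "measure Q B = (\<Prod>p<P. measure (sexp_time mu (len' p)) {..t1})"
    by (subst (asm) ennreal_inj) (auto intro!: prod_nonneg)
  have "measure Q B \<le> (\<Prod>p<P. 1 - exp (- a))"
    unfolding mB by (intro prod_mono) (auto intro: Fp)
  then have mB2: "measure Q B \<le> (1 - exp (- a)) ^ P" by simp
  define g where "g \<omega> = L + (t1 - L) * indicator (space Q - B) \<omega>" for \<omega> :: "nat \<Rightarrow> real"
  have gm: "g \<in> borel_measurable Q" unfolding g_def using Bsets by measurable
  have gi: "integrable Q g"
    unfolding g_def using Bsets
    by (intro Bochner_Integration.integrable_add integrable_mult_right integrable_real_indicator) (auto simp: Q.emeasure_finite less_top[symmetric])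
  have intg: "integral\<^sup>L Q g = L + (t1 - L) * (1 - measure Q B)"
  proof -
    have "integral\<^sup>L Q g = L + (t1 - L) * measure Q (space Q - B)"
      unfolding g_def using Bsets
      by (subst Bochner_Integration.integral_add) (auto intro!: integrable_mult_right integrable_real_indicator simp: Int_absorb2 Q.prob_space Q.emeasure_finite less_top[symmetric])
    also have "measure Q (space Q - B) = 1 - measure Q B" using Bsets by (rule Q.prob_compl)
    finally show ?thesis .
  qed
  have fm: "(\<lambda>\<omega>. Max (\<omega> ` {..<P})) \<in> borel_measurable Q"
    unfolding Q_def by (rule borel_measurable_Max[where f="\<lambda>p \<omega>. \<omega> p", simplified]) auto
  have Pne: "{..<P} \<noteq> {}" using P by (auto simp: lessThan_empty_iff)
  have inM: "\<exists>p<P. Max (\<omega> ` {..<P}) = \<omega> p" for \<omega> :: "nat \<Rightarrow> real"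
  proof -
    have "Max (\<omega> ` {..<P}) \<in> \<omega> ` {..<P}" using Pne by (intro Max_in) auto
    then show ?thesis by auto
  qed
  have fi: "integrable Q (\<lambda>\<omega>. Max (\<omega> ` {..<P}))"
    unfolding Q_def
  proof (rule ps_integrable_bound[OF lpos mu])
    show "(\<lambda>\<omega>. Max (\<omega> ` {..<P})) \<in> borel_measurable (proc_space mu len P)" using fm unfolding Q_def .
    show "\<bar>Max (\<omega> ` {..<P})\<bar> \<le> (\<Sum>p<P. \<bar>\<omega> p\<bar>)" for \<omega> :: "nat \<Rightarrow> real"
    proof -
      from inM[of \<omega>] obtain p where p: "p < P" "Max (\<omega> ` {..<P}) = \<omega> p" by blast
      show ?thesis unfolding p(2) by (rule mem_abs_le_sum[OF p(1)])
    qed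
  qed
  have AEg: "AE \<omega> in Q. g \<omega> \<le> Max (\<omega> ` {..<P})"
    using ps_AE[OF lpos mu, folded Q_def] AE_space[of Q]
  proof eventually_elim
    case (elim \<omega>)
    have M0: "\<omega> q \<le> Max (\<omega> ` {..<P})" if "q < P" for q using that by (intro Max_ge) auto
    show ?case
    proof (cases "\<omega> \<in> B")
      case True
      then have "g \<omega> = L" unfolding g_def by simp
      also have "L \<le> len 0" using lp P by auto
      also have "\<dots> \<le> \<omega> 0" using elim P by auto
      also have "\<dots> \<le> Max (\<omega> ` {..<P})" using M0 P by auto
      finally show ?thesis .
    next
      case False
      then have "g \<omega> = t1" unfolding g_def using elim by simp
      from False elim(2) obtain q where q: "q < P" "\<not> \<omega> q \<le> t1"
        unfolding B_def spQ by (auto simp: PiE_iff)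
      then show ?thesis using M0[OF q(1)] \<open>g \<omega> = t1\<close> by linarith
    qed
  qed
  have "integral\<^sup>L Q g \<le> integral\<^sup>L Q (\<lambda>\<omega>. Max (\<omega> ` {..<P}))"
    by (rule integral_mono_AE[OF gi fi AEg])
  moreover have "L + L * (a / mu) * (1 - (1 - exp (- a)) ^ P) \<le> integral\<^sup>L Q g"
    unfolding intg t1L[symmetric] using mB2 t1L0 by (intro add_left_mono mult_left_mono) auto
  ultimately show ?thesis unfolding Q_def by simp
qed



lemma basic_facts:
  fixes P Mn :: nat
  assumes c2: "c2 > 0" and hP: "exp (2 * c2 + 3) \<le> real P"
    and hup: "real Mn \<le> c2 * (real P / ln (real P))"
  shows "real P > 0" "ln (real P) \<ge> 2 * c2 + 3" "ln (real P) > 0" "ln (ln (real P)) \<ge> 1"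
    "2 * real Mn \<le> real P"
proof -
  have "exp (2 * c2 + 3) > 0" by simp
  then show P0: "real P > 0" using hP by linarith
  show lnP: "ln (real P) \<ge> 2 * c2 + 3" using hP P0 by (subst ln_ge_iff) auto
  then show lnP0: "ln (real P) > 0" using c2 by linarith
  have "exp 1 \<le> ln (real P)" using exp_le lnP c2 by linarith
  then show "ln (ln (real P)) \<ge> 1" using lnP0 by (subst ln_ge_iff) auto
  have "c2 * (real P / ln (real P)) = real P * (c2 / ln (real P))" by simp
  also have "c2 / ln (real P) \<le> 1 / 2" using lnP lnP0 c2 by (simp add: divide_simps)
  then have "real P * (c2 / ln (real P)) \<le> real P * (1 / 2)" using P0 by (intro mult_left_mono) auto
  finally show "2 * real Mn \<le> real P" using hup by linarith
qed

lemma one_minus_pow_le: "n \<ge> 1 \<Longrightarrow> (1 - 1 / real n) ^ n \<le> 1 / 2"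
proof -
  assume n: "n \<ge> 1"
  have "0 \<le> 1 - 1 / real n" using n by (simp add: divide_simps)
  moreover have "1 - 1 / real n \<le> exp (- (1 / real n))" by (rule exp_minus_ge)
  ultimately have "(1 - 1 / real n) ^ n \<le> exp (- (1 / real n)) ^ n" by (intro power_mono)
  also have "\<dots> = exp (real n * (- (1 / real n)))" by (rule exp_of_nat_mult[symmetric])
  also have "real n * (- (1 / real n)) = -1" using n by simp
  also have "exp (-1::real) \<le> 1 / 2"
  proof -
    have "2 \<le> exp (1::real)" using exp_ge_add_one_self[of 1] by simp
    then show ?thesis by (simp add: exp_minus field_simps)
  qed
  finally show ?thesis .
qed



lemma MDS_part:
  assumes mu: "mu > 0" and N: "N > 0" and M1: "1 \<le> Mn" and MP: "Mn \<le> P"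
  shows "1 \<le> E_MDS mu Mn P N / real N"
proof -
  have "real N \<le> E_MDS mu Mn P N"
    unfolding E_MDS_def using N by (intro MDS_LB[OF mu _ M1 MP]) auto
  then show ?thesis using N by (simp add: divide_simps)
qed

lemma rc_bounds:
  assumes M1: "1 \<le> Mn" and MP: "Mn \<le> P" and v: "valid_rows Mn P asg" and i: "i < Mn"
  shows "1 \<le> row_count P asg i" "row_count P asg i \<le> nat \<lceil>real P / real Mn\<rceil>"
proof -
  have x1: "real P / real Mn \<ge> 1" using M1 MP by (simp add: divide_simps)
  then have f1: "\<lfloor>real P / real Mn\<rfloor> \<ge> 1" by (simp add: le_floor_iff)
  have fc: "\<lfloor>real P / real Mn\<rfloor> \<le> \<lceil>real P / real Mn\<rceil>" by (rule floor_le_ceiling)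
  have rc: "row_count P asg i \<in> {nat \<lfloor>real P / real Mn\<rfloor>, nat \<lceil>real P / real Mn\<rceil>}"
    using v i unfolding valid_rows_def by blast
  have n1: "1 \<le> nat \<lfloor>real P / real Mn\<rfloor>" using f1 by linarith
  have n2: "nat \<lfloor>real P / real Mn\<rfloor> \<le> nat \<lceil>real P / real Mn\<rceil>" using fc by (rule nat_mono)
  show "1 \<le> row_count P asg i" using rc n1 n2 by auto
  show "row_count P asg i \<le> nat \<lceil>real P / real Mn\<rceil>" using rc n2 by auto
qed

lemma Rep_part:
  assumes mu: "mu > 0" and N: "N > 0" and M1: "1 \<le> Mn" and MP: "Mn \<le> P" and v: "valid_rows Mn P asg"
  shows "1 \<le> E_Rep mu Mn P N asg / real N"
proof -
  have ne: "{p. p < P \<and> asg p = i} \<noteq> {}" if i: "i < Mn" for i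
  proof
    assume "{p. p < P \<and> asg p = i} = {}"
    then have "row_count P asg i = 0" unfolding row_count_def by simp
    then show False using rc_bounds(1)[OF M1 MP v i] by simp
  qed
  have "real N \<le> E_Rep mu Mn P N asg"
    unfolding E_Rep_def using N M1 by (intro Rep_LB[OF mu _ _ ne]) auto
  then show ?thesis using N by (simp add: divide_simps)
qed

lemma UC_part:
  assumes mu: "mu > 0" and N: "N > 0" and c1: "c1 > 0" and M1: "1 \<le> Mn" and MP: "2 * real Mn \<le> real P"
    and lnP: "ln (real P) > 0" and hlo: "c1 * (real P / ln (real P)) \<le> real Mn"
    and v: "valid_rows Mn P asg"
  shows "c1 / (4 * mu) \<le> E_UC mu P N asg / real N"
proof -
  have MP': "Mn \<le> P" using MP by linarith
  have P1: "P \<ge> 1" using M1 MP' by linarith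
  define x where "x = real P / real Mn"
  have x1: "x \<ge> 1" unfolding x_def using M1 MP' by (simp add: divide_simps)
  define R where "R = nat \<lceil>x\<rceil>"
  have R1: "real R \<ge> 1" unfolding R_def using x1 by linarith
  have Rx: "real R \<le> 2 * x"
  proof -
    have "real R = real_of_int \<lceil>x\<rceil>" unfolding R_def using x1 by simp
    also have "\<dots> < x + 1" by linarith
    finally show ?thesis using x1 by linarith
  qed
  define L where "L = real N / real R"
  have L0: "L > 0" unfolding L_def using N R1 by simp
  define len where "len p = real N / real (row_count P asg (asg p))" for p
  have lp: "\<forall>p<P. L \<le> len p"
  proof (intro allI impI)
    fix p assume p: "p < P"
    have ai: "asg p < Mn" using v p unfolding valid_rows_def by blast
    have b1: "1 \<le> row_count P asg (asg p)" and b2: "row_count P asg (asg p) \<le> R"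
      using rc_bounds[OF M1 MP' v ai] unfolding R_def x_def by auto
    show "L \<le> len p" unfolding L_def len_def
      using b1 b2 N by (intro divide_left_mono) auto
  qed
  have E: "L + L * (ln (real P) / mu) * (1 - (1 - exp (- ln (real P))) ^ P) \<le> E_UC mu P N asg"
    unfolding E_UC_def using UC_LB[OF mu L0 lp[unfolded len_def] P1, of "ln (real P)"] lnP by simp
  have "exp (- ln (real P)) = 1 / real P" using P1 by (simp add: exp_minus inverse_eq_divide)
  then have "(1 - exp (- ln (real P))) ^ P \<le> 1 / 2" using one_minus_pow_le[OF P1] by simp
  then have h: "1 / 2 \<le> 1 - (1 - exp (- ln (real P))) ^ P" by simp
  have Lq: "0 \<le> L * (ln (real P) / mu)" using L0 lnP mu by simp
  have "L * (ln (real P) / mu) * (1 / 2) \<le> L * (ln (real P) / mu) * (1 - (1 - exp (- ln (real P))) ^ P)"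
    by (rule mult_left_mono[OF h Lq])
  then have E2: "L * (ln (real P) / mu) / 2 \<le> E_UC mu P N asg" using E L0 by simp
  have key: "c1 / 2 \<le> ln (real P) / real R"
  proof -
    have "c1 * (real P / ln (real P)) \<le> real Mn" by (rule hlo)
    then have "c1 * real P \<le> real Mn * ln (real P)" using lnP by (simp add: field_simps)
    moreover have "real R * real Mn \<le> 2 * real P"
      using Rx M1 unfolding x_def by (simp add: field_simps)
    ultimately have "c1 * real R * real Mn \<le> 2 * real Mn * ln (real P)"
    proof -
      assume a1: "c1 * real P \<le> real Mn * ln (real P)" and a2: "real R * real Mn \<le> 2 * real P"
      have "c1 * (real R * real Mn) \<le> c1 * (2 * real P)" using a2 c1 by (intro mult_left_mono) auto
      then show ?thesis using a1 by (simp add: algebra_simps)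
    qed
    then have "c1 * real R \<le> 2 * ln (real P)" using M1 by (simp add: mult.commute mult.left_commute)
    then show ?thesis using R1 by (simp add: field_simps)
  qed
  have "c1 / (4 * mu) = (c1 / 2) * (1 / (2 * mu))" by simp
  also have "\<dots> \<le> (ln (real P) / real R) * (1 / (2 * mu))" using key mu by (intro mult_right_mono) auto
  also have "\<dots> = (L * (ln (real P) / mu) / 2) / real N" unfolding L_def using N by (simp add: field_simps)
  also have "\<dots> \<le> E_UC mu P N asg / real N" using E2 N by (intro divide_right_mono) auto
  finally show ?thesis .
qed



lemma SD_part:
  fixes P Mn N :: nat
  assumes mu: "mu > 0" and N: "N > 0" and c1: "c1 > 0" and c2: "c2 > 0" and M1: "1 \<le> Mn" and ev: "even Mn"
    and MP: "2 * real Mn \<le> real P" and lnP: "ln (real P) > 0" and llP: "ln (ln (real P)) \<ge> 1"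
    and hup: "real Mn \<le> c2 * (real P / ln (real P))" and hlo: "c1 * (real P / ln (real P)) \<le> real Mn"
  shows "E_SD mu Mn (P - Mn div 2) P N / real N
           \<le> (3 / 2 * c2 * (1 + (\<bar>ln (2 / c1)\<bar> + 3) / mu)) * (ln (ln (real P)) / ln (real P))"
proof -
  define h where "h = Mn div 2"
  have Mh: "real Mn = 2 * real h" unfolding h_def using ev by auto
  have hP: "h < P" using MP M1 Mh by linarith
  define K where "K = P - h"
  have K1: "1 \<le> K" "K \<le> P" unfolding K_def using hP by auto
  have PK: "P - K + 1 = h + 1" unfolding K_def using hP by auto
  have rK: "real K = real P - real h" unfolding K_def using hP by auto
  have P0: "real P > 0" using hP by simp
  define s where "s = real N / real P * (real P - real K + real Mn)"
  have s_eq: "s = real N * (3 * real h) / real P" unfolding s_def rK Mh by simp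
  have s0: "s > 0" unfolding s_eq using N P0 hP M1 Mh by auto
  define a where "a = ln (real P / real (h + 1))"
  have h1P: "real (h + 1) \<le> real P" using hP by simp
  have a0: "a \<ge> 0" unfolding a_def using h1P by simp
  have ea: "exp (- a) = real (h + 1) / real P"
    unfolding a_def using P0 by (simp add: exp_minus exp_ln inverse_eq_divide)
  have E1: "E_SD mu Mn K P N \<le> s * (1 + a / mu) + real P / real (P - K + 1) * (2 * (s / mu) * exp (- a))"
    unfolding E_SD_def s_def by (rule SD_bound[OF mu _ K1 a0]) (use s0 s_def in simp)
  also have "real P / real (P - K + 1) * (2 * (s / mu) * exp (- a)) = 2 * s / mu"
  proof -
    have hp: "real (h + 1) > 0" by simp
    have "real P / real (h + 1) * (2 * (s / mu) * (real (h + 1) / real P)) = 2 * (s / mu) * ((real P / real (h + 1)) * (real (h + 1) / real P))"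
      by (simp only: mult_ac)
    also have "(real P / real (h + 1)) * (real (h + 1) / real P) = 1" using hp P0 by simp
    finally show ?thesis unfolding PK ea by simp
  qed
  finally have E2: "E_SD mu Mn K P N \<le> s * (1 + (a + 2) / mu)" using mu by (simp add: field_simps)
  define A where "A = \<bar>ln (2 / c1)\<bar>"
  have aA: "a \<le> A + ln (ln (real P))"
  proof -
    have "c1 * (real P / ln (real P)) \<le> 2 * real (h + 1)" using hlo Mh by simp
    then have "c1 * real P \<le> 2 * real (h + 1) * ln (real P)" using lnP by (simp add: field_simps)
    then have "real P / real (h + 1) \<le> 2 * ln (real P) / c1" using c1 by (simp add: field_simps)
    then have "a \<le> ln (2 * ln (real P) / c1)" unfolding a_def using P0 lnP c1 by (subst ln_le_cancel_iff) auto
    also have "2 * ln (real P) / c1 = (2 / c1) * ln (real P)" by simp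
    also have "ln \<dots> = ln (2 / c1) + ln (ln (real P))" using c1 lnP by (subst ln_mult) auto
    finally show ?thesis unfolding A_def by linarith
  qed
  have A0: "A \<ge> 0" unfolding A_def by simp
  have fac: "1 + (a + 2) / mu \<le> (1 + (A + 3) / mu) * ln (ln (real P))"
  proof -
    have "1 + (a + 2) / mu \<le> 1 + (A + ln (ln (real P)) + 2) / mu"
      using aA mu by (simp add: divide_right_mono)
    also have "\<dots> \<le> (1 + (A + 3) / mu) * ln (ln (real P))"
    proof -
      have "(A + ln (ln (real P)) + 2) \<le> (A + 3) * ln (ln (real P))"
      proof -
        have q1: "A \<le> A * ln (ln (real P))" using mult_left_mono[OF llP A0] by simp
        have "(A + 3) * ln (ln (real P)) = A * ln (ln (real P)) + 3 * ln (ln (real P))"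
          by (simp add: algebra_simps)
        then show ?thesis using q1 llP by linarith
      qed
      then have "(A + ln (ln (real P)) + 2) / mu \<le> (A + 3) * ln (ln (real P)) / mu"
        using mu by (simp add: divide_right_mono)
      then show ?thesis using llP by (simp add: algebra_simps)
    qed
    finally show ?thesis .
  qed
  have sN: "s / real N \<le> 3 / 2 * c2 / ln (real P)"
  proof -
    have "s / real N = 3 / 2 * real Mn / real P" unfolding s_eq Mh using N by simp
    also have "\<dots> \<le> 3 / 2 * (c2 * (real P / ln (real P))) / real P"
      using hup P0 by (intro divide_right_mono mult_left_mono) auto
    also have "\<dots> = 3 / 2 * c2 / ln (real P)" using P0 by simp
    finally show ?thesis .
  qed
  have "E_SD mu Mn K P N / real N \<le> (s * (1 + (a + 2) / mu)) / real N"
    using E2 N by (intro divide_right_mono) auto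
  also have "\<dots> = (s / real N) * (1 + (a + 2) / mu)" by simp
  also have "\<dots> \<le> (3 / 2 * c2 / ln (real P)) * ((1 + (A + 3) / mu) * ln (ln (real P)))"
  proof (rule mult_mono[OF sN fac])
    show "0 \<le> 3 / 2 * c2 / ln (real P)" using c2 lnP by simp
    show "0 \<le> 1 + (a + 2) / mu" using a0 mu by simp
  qed
  also have "\<dots> = (3 / 2 * c2 * (1 + (A + 3) / mu)) * (ln (ln (real P)) / ln (real P))" by simp
  finally show ?thesis unfolding K_def h_def A_def .
qed



theorem theorem4:
  fixes mu :: real and M :: "nat \<Rightarrow> nat"
  assumes mu_pos: "mu > 0"
    and M_even_pos: "\<forall>P. even (M P) \<and> M P > 0"
    and M_scaling: "(\<lambda>P. real (M P)) \<in> \<Theta>(\<lambda>P. real P / ln (real P))"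
  shows
    "(\<exists>C. \<forall>\<^sub>F P in at_top. \<forall>N::nat. N > 0 \<longrightarrow>
         P dvd N * (P - (P - M P div 2) + M P) \<longrightarrow>
         E_SD mu (M P) (P - M P div 2) P N / real N \<le> C * (ln (ln (real P)) / ln (real P)))
     \<and> (\<exists>c>0. \<forall>\<^sub>F P in at_top. \<forall>N::nat. N > 0 \<longrightarrow>
         E_MDS mu (M P) P N / real N \<ge> c)
     \<and> (\<exists>c>0. \<forall>\<^sub>F P in at_top. \<forall>N::nat. \<forall>asg. N > 0 \<longrightarrow> valid_rows (M P) P asg \<longrightarrow>
         E_Rep mu (M P) P N asg / real N \<ge> c)
     \<and> (\<exists>c>0. \<forall>\<^sub>F P in at_top. \<forall>N::nat. \<forall>asg. N > 0 \<longrightarrow> valid_rows (M P) P asg \<longrightarrow>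
         (\<forall>i<M P. row_count P asg i dvd N) \<longrightarrow>
         E_UC mu P N asg / real N \<ge> c)"
proof -
  from bigthetaD1[OF M_scaling] obtain c2 where c2: "c2 > 0"
    and up: "\<forall>\<^sub>F P in at_top. norm (real (M P)) \<le> c2 * norm (real P / ln (real P))"
    by (rule landau_o.bigE)
  from bigthetaD2[OF M_scaling] obtain c1 where c1: "c1 > 0"
    and lo: "\<forall>\<^sub>F P in at_top. norm (real (M P)) \<ge> c1 * norm (real P / ln (real P))"
    by (rule landau_omega.bigE)
  have big: "\<forall>\<^sub>F P in at_top. exp (2 * c2 + 3) \<le> real (P::nat)"
  proof -
    have "\<forall>\<^sub>F P in at_top. nat \<lceil>exp (2 * c2 + 3)\<rceil> \<le> (P::nat)" by (rule eventually_ge_at_top)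
    then show ?thesis
    proof eventually_elim
      case (elim P)
      then have "real (nat \<lceil>exp (2 * c2 + 3)\<rceil>) \<le> real P" by (simp only: of_nat_le_iff)
      moreover have "exp (2 * c2 + 3) \<le> real (nat \<lceil>exp (2 * c2 + 3)\<rceil>)"
      proof -
        have "exp (2 * c2 + 3) \<le> real_of_int \<lceil>exp (2 * c2 + 3)\<rceil>" by (rule le_of_int_ceiling)
        moreover have "0 \<le> \<lceil>exp (2 * c2 + 3)\<rceil>" using exp_gt_zero[of "2 * c2 + 3"] by linarith
        ultimately show ?thesis by simp
      qed
      ultimately show ?case by linarith
    qed
  qed
  have ev: "\<forall>\<^sub>F P in at_top. exp (2 * c2 + 3) \<le> real P \<and> real (M P) \<le> c2 * (real P / ln (real P))
              \<and> c1 * (real P / ln (real P)) \<le> real (M P)"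
    using big up lo
  proof eventually_elim
    case (elim P)
    have "exp (2 * c2 + 3) > 0" by simp
    then have P0: "real P > 0" using elim by linarith
    have "ln (real P) \<ge> 2 * c2 + 3" using elim P0 by (subst ln_ge_iff) auto
    then have "ln (real P) > 0" using c2 by linarith
    then have ab: "\<bar>ln (real P)\<bar> = ln (real P)" by simp
    show ?case using elim ab by simp
  qed
  define C where "C = 3 / 2 * c2 * (1 + (\<bar>ln (2 / c1)\<bar> + 3) / mu)"
  have part1: "\<forall>\<^sub>F P in at_top. \<forall>N::nat. N > 0 \<longrightarrow>
         P dvd N * (P - (P - M P div 2) + M P) \<longrightarrow>
         E_SD mu (M P) (P - M P div 2) P N / real N \<le> C * (ln (ln (real P)) / ln (real P))"
    using ev
  proof eventually_elim
    case (elim P)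
    note bf = basic_facts[OF c2 conjunct1[OF elim] conjunct1[OF conjunct2[OF elim]]]
    have M1: "1 \<le> M P" using M_even_pos by (simp add: Suc_le_eq)
    show ?case unfolding C_def
      using SD_part[OF mu_pos _ c1 c2 M1 _ bf(5) bf(3) bf(4)] elim M_even_pos by auto
  qed
  have part2: "\<forall>\<^sub>F P in at_top. \<forall>N::nat. N > 0 \<longrightarrow> E_MDS mu (M P) P N / real N \<ge> 1"
    using ev
  proof eventually_elim
    case (elim P)
    note bf = basic_facts[OF c2 conjunct1[OF elim] conjunct1[OF conjunct2[OF elim]]]
    have M1: "1 \<le> M P" using M_even_pos by (simp add: Suc_le_eq)
    have MP: "M P \<le> P" using bf(5) by linarith
    show ?case using MDS_part[OF mu_pos _ M1 MP] by auto
  qed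
  have part3: "\<forall>\<^sub>F P in at_top. \<forall>N::nat. \<forall>asg. N > 0 \<longrightarrow> valid_rows (M P) P asg \<longrightarrow>
         E_Rep mu (M P) P N asg / real N \<ge> 1"
    using ev
  proof eventually_elim
    case (elim P)
    note bf = basic_facts[OF c2 conjunct1[OF elim] conjunct1[OF conjunct2[OF elim]]]
    have M1: "1 \<le> M P" using M_even_pos by (simp add: Suc_le_eq)
    have MP: "M P \<le> P" using bf(5) by linarith
    show ?case using Rep_part[OF mu_pos _ M1 MP] by auto
  qed
  have part4: "\<forall>\<^sub>F P in at_top. \<forall>N::nat. \<forall>asg. N > 0 \<longrightarrow> valid_rows (M P) P asg \<longrightarrow>
         (\<forall>i<M P. row_count P asg i dvd N) \<longrightarrow>
         E_UC mu P N asg / real N \<ge> c1 / (4 * mu)"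
    using ev
  proof eventually_elim
    case (elim P)
    note bf = basic_facts[OF c2 conjunct1[OF elim] conjunct1[OF conjunct2[OF elim]]]
    have M1: "1 \<le> M P" using M_even_pos by (simp add: Suc_le_eq)
    show ?case using UC_part[OF mu_pos _ c1 M1 bf(5) bf(3)] elim by auto
  qed
  have c14: "c1 / (4 * mu) > 0" using c1 mu_pos by simp
  show ?thesis
  proof (intro conjI)
    show "\<exists>C. \<forall>\<^sub>F P in at_top. \<forall>N::nat. N > 0 \<longrightarrow>
         P dvd N * (P - (P - M P div 2) + M P) \<longrightarrow>
         E_SD mu (M P) (P - M P div 2) P N / real N \<le> C * (ln (ln (real P)) / ln (real P))"
      using part1 by (rule exI)
    show "\<exists>c>0. \<forall>\<^sub>F P in at_top. \<forall>N::nat. N > 0 \<longrightarrow> E_MDS mu (M P) P N / real N \<ge> c"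
      using part2 by (intro exI[of _ 1] conjI) simp_all
    show "\<exists>c>0. \<forall>\<^sub>F P in at_top. \<forall>N::nat. \<forall>asg. N > 0 \<longrightarrow> valid_rows (M P) P asg \<longrightarrow>
         E_Rep mu (M P) P N asg / real N \<ge> c"
      using part3 by (intro exI[of _ 1] conjI) simp_all
    show "\<exists>c>0. \<forall>\<^sub>F P in at_top. \<forall>N::nat. \<forall>asg. N > 0 \<longrightarrow> valid_rows (M P) P asg \<longrightarrow>
         (\<forall>i<M P. row_count P asg i dvd N) \<longrightarrow>
         E_UC mu P N asg / real N \<ge> c"
      using part4 c14 by (intro exI[of _ "c1 / (4 * mu)"] conjI) simp_all
  qed
qed

end
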